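(* For $n\ge 1$, let $\operatorname{NE}_n(k)$ denote the number of permutations $\sigma\in\mathfrak{S}_n$ with nesting number $\operatorname{Ne}(\sigma)=k$. Then \[\operatorname{NE}_n(\lceil n/2\rceil)=\begin{cases} m! & \text{if } n=2m+1,\\ 2(m+1)!-(m-1)!-1 & \text{if } n=2m.\end{cases}\]
   Context: For $\sigma\in\mathfrak{S}_n$, the arcs of $\sigma$ are the pairs $(a,\sigma(a))$, $1\le a\le n$. A $k$-nesting of $\sigma$ is a set of $k$ arcs $\{(a_i,\sigma(a_i)):1\le i\le k\}$ satisfying either $a_1<a_2<\dots<a_k\le\sigma(a_k)<\dots<\sigma(a_2)<\sigma(a_1)$ (upper $k$-nesting; loops $a=\sigma(a)$ are allowed) or $\sigma(a_1)<\sigma(a_2)<\dots<\sigma(a_k)<a_k<\dots<a_2<a_1$ (lower $k$-nesting). The nesting number $\operatorname{Ne}(\sigma)$ is the largest $k$ such that $\sigma$ has a $k$-nesting. *)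

theory Defs
  imports "HOL-Combinatorics.Permutations"
begin

definition upper_nesting :: "nat \<Rightarrow> (nat \<Rightarrow> nat) \<Rightarrow> nat \<Rightarrow> (nat \<Rightarrow> nat) \<Rightarrow> bool" where
  "upper_nesting n \<sigma> k a \<longleftrightarrow> k \<ge> 1 \<and> (\<forall>i<k. a i \<in> {1..n}) \<and>
     (\<forall>i. Suc i < k \<longrightarrow> a i < a (Suc i) \<and> \<sigma> (a (Suc i)) < \<sigma> (a i)) \<and>
     a (k - 1) \<le> \<sigma> (a (k - 1))"

definition lower_nesting :: "nat \<Rightarrow> (nat \<Rightarrow> nat) \<Rightarrow> nat \<Rightarrow> (nat \<Rightarrow> nat) \<Rightarrow> bool" where
  "lower_nesting n \<sigma> k a \<longleftrightarrow> k \<ge> 1 \<and> (\<forall>i<k. a i \<in> {1..n}) \<and>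
     (\<forall>i. Suc i < k \<longrightarrow> \<sigma> (a i) < \<sigma> (a (Suc i)) \<and> a (Suc i) < a i) \<and>
     \<sigma> (a (k - 1)) < a (k - 1)"

definition has_nesting :: "nat \<Rightarrow> (nat \<Rightarrow> nat) \<Rightarrow> nat \<Rightarrow> bool" where
  "has_nesting n \<sigma> k \<longleftrightarrow> (\<exists>a. upper_nesting n \<sigma> k a \<or> lower_nesting n \<sigma> k a)"

definition nesting_number :: "nat \<Rightarrow> (nat \<Rightarrow> nat) \<Rightarrow> nat" where
  "nesting_number n \<sigma> = Max {k. has_nesting n \<sigma> k}"

definition NE :: "nat \<Rightarrow> nat \<Rightarrow> nat" where
  "NE n k = card {\<sigma>. \<sigma> permutes {1..n} \<and> nesting_number n \<sigma> = k}"

end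

theory Submission
  imports Defs
begin


lemma card_ext:
  assumes fin: "finite S" and AS: "A \<subseteq> S" and inj: "inj_on f A" and fA: "f ` A \<subseteq> S"
  shows "card {\<sigma>. \<sigma> permutes S \<and> (\<forall>i\<in>A. \<sigma> i = f i)} = fact (card S - card A)"
proof -
  have finA: "finite A" using fin AS finite_subset by blast
  have c1: "card (S - A) = card S - card A" using AS finA by (simp add: card_Diff_subset)
  have c2: "card (S - f ` A) = card S - card A"
    using fA finA inj by (simp add: card_Diff_subset card_image)
  obtain g where g: "bij_betw g (S - A) (S - f ` A)"
    using finite_same_card_bij[of "S - A" "S - f ` A"] fin c1 c2 by auto
  define s0 where "s0 i = (if i \<in> A then f i else if i \<in> S then g i else i)" for i
  have b1: "bij_betw s0 A (f ` A)"
    using inj unfolding s0_def by (simp add: bij_betw_def inj_on_def image_def)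
  have b2: "bij_betw s0 (S - A) (S - f ` A)"
    using g by (rule bij_betw_cong[THEN iffD1, rotated]) (simp add: s0_def)
  have "bij_betw s0 (A \<union> (S - A)) (f ` A \<union> (S - f ` A))"
    by (rule bij_betw_combine[OF b1 b2]) auto
  moreover have "A \<union> (S - A) = S" "f ` A \<union> (S - f ` A) = S" using AS fA by auto
  ultimately have "bij_betw s0 S S" by simp
  then have p0: "s0 permutes S"
    by (rule bij_imp_permutes) (use AS in \<open>auto simp: s0_def\<close>)
  have eq: "{\<sigma>. \<sigma> permutes S \<and> (\<forall>i\<in>A. \<sigma> i = f i)} = (\<lambda>\<tau>. s0 \<circ> \<tau>) ` {\<tau>. \<tau> permutes (S - A)}"
  proof (intro set_eqI iffI)
    fix \<sigma> assume "\<sigma> \<in> {\<sigma>. \<sigma> permutes S \<and> (\<forall>i\<in>A. \<sigma> i = f i)}"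
    then have ps: "\<sigma> permutes S" and sa: "\<forall>i\<in>A. \<sigma> i = f i" by auto
    define \<tau> where "\<tau> = inv s0 \<circ> \<sigma>"
    have pt: "\<tau> permutes S" unfolding \<tau>_def using ps p0 by (simp add: permutes_compose permutes_inv)
    have fixA: "\<tau> i = i" if "i \<in> A" for i
    proof -
      have "\<sigma> i = s0 i" using sa that by (simp add: s0_def)
      then show ?thesis unfolding \<tau>_def using permutes_inverses(2)[OF p0] by simp
    qed
    have "\<tau> permutes (S - A)"
      using pt fixA unfolding permutes_def by (metis Diff_iff)
    moreover have "\<sigma> = s0 \<circ> \<tau>" unfolding \<tau>_def using permutes_inverses(1)[OF p0] by (simp add: fun_eq_iff)
    ultimately show "\<sigma> \<in> (\<lambda>\<tau>. s0 \<circ> \<tau>) ` {\<tau>. \<tau> permutes (S - A)}" by auto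
  next
    fix \<sigma> assume "\<sigma> \<in> (\<lambda>\<tau>. s0 \<circ> \<tau>) ` {\<tau>. \<tau> permutes (S - A)}"
    then obtain \<tau> where t: "\<tau> permutes (S - A)" and s: "\<sigma> = s0 \<circ> \<tau>" by auto
    have "\<tau> permutes S" using t permutes_subset by blast
    then have "\<sigma> permutes S" using s p0 permutes_compose by blast
    moreover have "\<forall>i\<in>A. \<sigma> i = f i" using s permutes_not_in[OF t] by (simp add: s0_def)
    ultimately show "\<sigma> \<in> {\<sigma>. \<sigma> permutes S \<and> (\<forall>i\<in>A. \<sigma> i = f i)}" by auto
  qed
  have "inj_on (\<lambda>\<tau>. s0 \<circ> \<tau>) {\<tau>. \<tau> permutes (S - A)}"
  proof (rule inj_onI)
    fix x y assume "s0 \<circ> x = s0 \<circ> y"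
    then show "x = y" using permutes_inj[OF p0] by (simp add: fun_eq_iff inj_eq)
  qed
  then have "card {\<sigma>. \<sigma> permutes S \<and> (\<forall>i\<in>A. \<sigma> i = f i)} = card {\<tau>. \<tau> permutes (S - A)}"
    by (simp add: eq card_image)
  also have "\<dots> = fact (card S - card A)" using card_permutations[OF c1] fin by simp
  finally show ?thesis .
qed

lemma card_ext2:
  assumes fin: "finite S" and gJ: "g ` J \<subseteq> S" and hJ: "h ` J \<subseteq> S" and ig: "inj_on g J" and ih: "inj_on h J"
  shows "card {\<sigma>. \<sigma> permutes S \<and> (\<forall>j\<in>J. \<sigma> (g j) = h j)} = fact (card S - card J)"
proof -
  have "{\<sigma>. \<sigma> permutes S \<and> (\<forall>j\<in>J. \<sigma> (g j) = h j)} = {\<sigma>. \<sigma> permutes S \<and> (\<forall>i\<in>g ` J. \<sigma> i = (h \<circ> inv_into J g) i)}"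
    using ig by auto
  also have "card \<dots> = fact (card S - card (g ` J))"
  proof (rule card_ext[OF fin gJ])
    show "inj_on (h \<circ> inv_into J g) (g ` J)"
      using ih ig by (simp add: comp_inj_on inj_on_inv_into inv_into_image_cancel)
    show "(h \<circ> inv_into J g) ` g ` J \<subseteq> S" using hJ ig by (auto)
  qed
  also have "card (g ` J) = card J" using ig by (simp add: card_image)
  finally show ?thesis .
qed



lemma chain_incr:
  assumes "\<forall>i. Suc i < k \<longrightarrow> f i < (f (Suc i)::nat)" "j < k" "i \<le> j"
  shows "f i + (j - i) \<le> f j"
  using assms(2,3)
proof (induction j)
  case 0 then show ?case by simp
next
  case (Suc j)
  show ?case
  proof (cases "i = Suc j")
    case False
    then have "f i + (j - i) \<le> f j" using Suc by simp
    moreover have "f j < f (Suc j)" using assms(1) Suc.prems by simp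
    ultimately show ?thesis using False Suc.prems by linarith
  qed simp
qed

lemma chain_decr:
  assumes "\<forall>i. Suc i < k \<longrightarrow> f (Suc i) < (f i::nat)" "j < k" "i \<le> j"
  shows "f j + (j - i) \<le> f i"
  using assms(2,3)
proof (induction j)
  case 0 then show ?case by simp
next
  case (Suc j)
  show ?case
  proof (cases "i = Suc j")
    case False
    then have "f j + (j - i) \<le> f i" using Suc by simp
    moreover have "f (Suc j) < f j" using assms(1) Suc.prems by simp
    ultimately show ?thesis using False Suc.prems by linarith
  qed simp
qed

lemma perm_range: "\<sigma> permutes {1..n} \<Longrightarrow> i \<in> {1..n} \<Longrightarrow> \<sigma> i \<in> {1..(n::nat)}"
  by (simp only: permutes_in_image)

lemma upper_facts:
  assumes "upper_nesting n \<sigma> k a" "\<sigma> permutes {1..n}" "i \<le> j" "j < k"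
  shows "a i + (j - i) \<le> a j" "\<sigma> (a j) + (j - i) \<le> \<sigma> (a i)" "1 \<le> a i" "\<sigma> (a i) \<le> n"
    "a (k-1) \<le> \<sigma> (a (k-1))" "a i \<le> n" "1 \<le> \<sigma> (a i)"
proof -
  have inc: "\<forall>i. Suc i < k \<longrightarrow> a i < a (Suc i)" and dec: "\<forall>i. Suc i < k \<longrightarrow> (\<sigma> \<circ> a) (Suc i) < (\<sigma> \<circ> a) i"
    using assms(1) unfolding upper_nesting_def by auto
  show "a i + (j - i) \<le> a j" using chain_incr[OF inc assms(4,3)] .
  show "\<sigma> (a j) + (j - i) \<le> \<sigma> (a i)" using chain_decr[OF dec assms(4,3)] by simp
  have "a i \<in> {1..n}" using assms(1,3,4) unfolding upper_nesting_def by auto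
  then show "1 \<le> a i" "\<sigma> (a i) \<le> n" "a i \<le> n" "1 \<le> \<sigma> (a i)" using perm_range[OF assms(2)] by auto
  show "a (k-1) \<le> \<sigma> (a (k-1))" using assms(1) unfolding upper_nesting_def by auto
qed

lemma lower_facts:
  assumes "lower_nesting n \<sigma> k a" "\<sigma> permutes {1..n}" "i \<le> j" "j < k"
  shows "\<sigma> (a i) + (j - i) \<le> \<sigma> (a j)" "a j + (j - i) \<le> a i" "1 \<le> a i" "\<sigma> (a i) \<le> n"
    "\<sigma> (a (k-1)) < a (k-1)" "a i \<le> n" "1 \<le> \<sigma> (a i)"
proof -
  have dec: "\<forall>i. Suc i < k \<longrightarrow> a (Suc i) < a i" and inc: "\<forall>i. Suc i < k \<longrightarrow> (\<sigma> \<circ> a) i < (\<sigma> \<circ> a) (Suc i)"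
    using assms(1) unfolding lower_nesting_def by auto
  show "a j + (j - i) \<le> a i" using chain_decr[OF dec assms(4,3)] .
  show "\<sigma> (a i) + (j - i) \<le> \<sigma> (a j)" using chain_incr[OF inc assms(4,3)] by simp
  have "a i \<in> {1..n}" using assms(1,3,4) unfolding lower_nesting_def by auto
  then show "1 \<le> a i" "\<sigma> (a i) \<le> n" "a i \<le> n" "1 \<le> \<sigma> (a i)" using perm_range[OF assms(2)] by auto
  show "\<sigma> (a (k-1)) < a (k-1)" using assms(1) unfolding lower_nesting_def by auto
qed

lemma upper_bound:
  assumes "upper_nesting n \<sigma> k a" "\<sigma> permutes {1..n}"
  shows "2 * k \<le> n + 1"
proof -
  have k: "k \<ge> 1" using assms(1) unfolding upper_nesting_def by auto
  note f = upper_facts[OF assms]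
  have "a 0 + (k-1 - 0) \<le> a (k-1)" "\<sigma> (a (k-1)) + (k-1-0) \<le> \<sigma> (a 0)" "1 \<le> a 0" "\<sigma> (a 0) \<le> n" "a (k-1) \<le> \<sigma> (a (k-1))"
    using f[of 0 "k-1"] k by auto
  then show ?thesis using k by linarith
qed

lemma lower_bound:
  assumes "lower_nesting n \<sigma> k a" "\<sigma> permutes {1..n}"
  shows "2 * k \<le> n"
proof -
  have k: "k \<ge> 1" using assms(1) unfolding lower_nesting_def by auto
  note f = lower_facts[OF assms]
  have "\<sigma> (a 0) + (k-1 - 0) \<le> \<sigma> (a (k-1))" "a (k-1) + (k-1-0) \<le> a 0" "1 \<le> \<sigma> (a 0)" "a 0 \<le> n" "\<sigma> (a (k-1)) < a (k-1)"
    using f[of 0 "k-1"] k by auto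
  then show ?thesis using k by linarith
qed

lemma nesting_bound:
  assumes "has_nesting n \<sigma> k" "\<sigma> permutes {1..n}"
  shows "k \<le> (n + 1) div 2"
  using assms upper_bound lower_bound unfolding has_nesting_def by fastforce

lemma has_nesting_1:
  assumes "\<sigma> permutes {1..n}" "n \<ge> 1"
  shows "has_nesting n \<sigma> 1"
proof -
  have "\<sigma> 1 \<in> {1..n}" using perm_range[OF assms(1)] assms(2) by auto
  then have "upper_nesting n \<sigma> 1 (\<lambda>_. 1)" using assms(2) unfolding upper_nesting_def by auto
  then show ?thesis unfolding has_nesting_def by blast
qed

lemma nesting_number_eq:
  assumes "\<sigma> permutes {1..n}" "n \<ge> 1"
  shows "nesting_number n \<sigma> = (n + 1) div 2 \<longleftrightarrow> has_nesting n \<sigma> ((n + 1) div 2)"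
proof -
  let ?K = "{k. has_nesting n \<sigma> k}"
  have sub: "?K \<subseteq> {..(n+1) div 2}" using nesting_bound[OF _ assms(1)] by auto
  then have fin: "finite ?K" using finite_subset by blast
  have ne: "?K \<noteq> {}" using has_nesting_1[OF assms] by auto
  show ?thesis
  proof
    assume "nesting_number n \<sigma> = (n + 1) div 2"
    then show "has_nesting n \<sigma> ((n + 1) div 2)"
      using Max_in[OF fin ne] unfolding nesting_number_def by simp
  next
    assume h: "has_nesting n \<sigma> ((n + 1) div 2)"
    show "nesting_number n \<sigma> = (n + 1) div 2"
      unfolding nesting_number_def
      by (rule Max_eqI[OF fin]) (use sub h in auto)
  qed
qed



definition cc :: "nat \<Rightarrow> nat \<Rightarrow> nat" where "cc x j = (if j < x then j else Suc j)"

lemma odd_char: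
  assumes p: "\<sigma> permutes {1..2*m+1}"
  shows "has_nesting (2*m+1) \<sigma> (m+1) \<longleftrightarrow> (\<forall>j\<in>{1..m+1}. \<sigma> j = 2*m+2-j)"
proof
  assume "has_nesting (2*m+1) \<sigma> (m+1)"
  then obtain a where "upper_nesting (2*m+1) \<sigma> (m+1) a \<or> lower_nesting (2*m+1) \<sigma> (m+1) a"
    unfolding has_nesting_def by blast
  moreover have "\<not> lower_nesting (2*m+1) \<sigma> (m+1) a" using lower_bound[OF _ p] by fastforce
  ultimately have u: "upper_nesting (2*m+1) \<sigma> (m+1) a" by blast
  have key: "a j = j + 1 \<and> \<sigma> (a j) = 2*m+1-j" if "j \<le> m" for j
  proof -
    note f = upper_facts[OF u p]
    have "a 0 + (j - 0) \<le> a j" "\<sigma> (a j) + (j-0) \<le> \<sigma> (a 0)" using f[of 0 j] that by auto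
    moreover have "a j + (m - j) \<le> a m" "\<sigma> (a m) + (m-j) \<le> \<sigma> (a j)" using f[of j m] that by auto
    moreover have "a 0 + (m - 0) \<le> a m" "\<sigma> (a m) + (m-0) \<le> \<sigma> (a 0)" "1 \<le> a 0" "\<sigma> (a 0) \<le> 2*m+1"
      "a (m+1-1) \<le> \<sigma> (a (m+1-1))"
      using f[of 0 m] by auto
    ultimately show ?thesis using that by (simp only: diff_zero add_diff_cancel_right') linarith
  qed
  show "\<forall>j\<in>{1..m+1}. \<sigma> j = 2*m+2-j"
  proof
    fix j assume "j \<in> {1..m+1}"
    then obtain i where i: "j = Suc i" "i \<le> m" by (cases j) auto
    have k1: "a i = Suc i" "\<sigma> (a i) = 2*m+1-i" using key[of i] i by auto
    have "\<sigma> (Suc i) = 2*m+1-i" using k1 by metis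
    then show "\<sigma> j = 2*m+2-j" using i by simp
  qed
next
  assume h: "\<forall>j\<in>{1..m+1}. \<sigma> j = 2*m+2-j"
  have "upper_nesting (2*m+1) \<sigma> (m+1) (\<lambda>j. j+1)"
    unfolding upper_nesting_def
  proof (intro conjI allI impI)
    fix i assume "Suc i < m + 1"
    then show "i + 1 < Suc i + 1" "\<sigma> (Suc i + 1) < \<sigma> (i + 1)" using h by auto
  qed (use h in auto)
  then show "has_nesting (2*m+1) \<sigma> (m+1)" unfolding has_nesting_def by blast
qed

lemma incr_miss:
  assumes inc: "\<forall>j. Suc j < K \<longrightarrow> b j < (b (Suc j)::nat)" and rng: "\<forall>j<K. 1 \<le> b j \<and> b j \<le> Suc K"
    and K: "K \<ge> 1"
  shows "\<exists>x\<in>{1..Suc K}. \<forall>j<K. b j = cc x (Suc j)"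
proof -
  have lo: "b j \<ge> j + 1" if "j < K" for j
    using chain_incr[OF inc, where j=j and i=0] rng that by auto
  have hi: "b j \<le> j + 2" if "j < K" for j
  proof -
    have "b j + (K-1-j) \<le> b (K-1)" using chain_incr[OF inc, where j="K-1" and i=j] that K by auto
    moreover have "b (K-1) \<le> Suc K" using rng K by auto
    ultimately show ?thesis using that by linarith
  qed
  have up: "b j' = j' + 2" if "b j = j + 2" "j \<le> j'" "j' < K" for j j'
    using chain_incr[OF inc that(3,2)] that hi[of j'] by auto
  let ?P = "{j. j < K \<and> b j = j + 2}"
  show ?thesis
  proof (cases "?P = {}")
    case True
    then show ?thesis using lo hi by (intro bexI[of _ "Suc K"]) (force simp: cc_def)+
  next
    case False
    define l where "l = Min ?P"
    have fin: "finite ?P" by auto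
    have lP: "l \<in> ?P" using Min_in[OF fin False] l_def by simp
    have lmin: "l \<le> j" if "j \<in> ?P" for j using Min_le[OF fin that] l_def by simp
    show ?thesis
    proof (intro bexI[of _ "Suc l"] allI impI)
      fix j assume j: "j < K"
      show "b j = cc (Suc l) (Suc j)"
      proof (cases "l \<le> j")
        case True
        then show ?thesis using up[of l j] lP j by (auto simp: cc_def)
      next
        case False
        then have "b j \<noteq> j + 2" using lmin[of j] j by auto
        then show ?thesis using lo[OF j] hi[OF j] False by (auto simp: cc_def)
      qed
    qed (use lP in auto)
  qed
qed



lemma even_char_dir1:
  assumes p: "\<sigma> permutes {1..2*m}" and m: "m \<ge> 1" and h: "has_nesting (2*m) \<sigma> m"
  shows "(\<forall>j\<in>{1..m}. \<sigma> j = 2*m+1-j) \<or> (\<forall>j\<in>{1..m}. \<sigma> (2*m+1-j) = j) \<or>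
    (\<exists>x\<in>{1..2*m}. \<forall>j\<in>{1..m}. \<sigma> (cc x j) = cc x (2*m-j))"
proof -
  obtain a where "upper_nesting (2*m) \<sigma> m a \<or> lower_nesting (2*m) \<sigma> m a"
    using h unfolding has_nesting_def by blast
  then show ?thesis
  proof
    assume u: "upper_nesting (2*m) \<sigma> m a"
    note f = upper_facts[OF u p]
    show ?thesis
    proof (cases "a (m-1) < \<sigma> (a (m-1))")
      case True
      have key: "a j = j + 1 \<and> \<sigma> (a j) = 2*m-j" if "j \<le> m-1" for j
      proof -
        have "a 0 + (j - 0) \<le> a j" "\<sigma> (a j) + (j-0) \<le> \<sigma> (a 0)" using f[of 0 j] that m by auto
        moreover have "a j + (m-1 - j) \<le> a (m-1)" "\<sigma> (a (m-1)) + (m-1-j) \<le> \<sigma> (a j)" using f[of j "m-1"] that m by auto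
        moreover have "a 0 + (m-1 - 0) \<le> a (m-1)" "\<sigma> (a (m-1)) + (m-1-0) \<le> \<sigma> (a 0)" "1 \<le> a 0" "\<sigma> (a 0) \<le> 2*m"
          using f[of 0 "m-1"] m by auto
        ultimately show ?thesis using that True m by (simp only: diff_zero) linarith
      qed
      have "\<forall>j\<in>{1..m}. \<sigma> j = 2*m+1-j"
      proof
        fix j assume "j \<in> {1..m}"
        then obtain i where i: "j = Suc i" "i \<le> m-1" by (cases j) auto
        have k1: "a i = Suc i" "\<sigma> (a i) = 2*m-i" using key[of i] i by auto
        have "\<sigma> (Suc i) = 2*m-i" using k1 by metis
        then show "\<sigma> j = 2*m+1-j" using i by simp
      qed
      then show ?thesis by blast
    next
      case False
      then have eqf: "\<sigma> (a (m-1)) = a (m-1)" using f(5)[of 0 0] m by auto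
      define b where "b t = (if t < m then a t else \<sigma> (a (2*m-2-t)))" for t
      have binc: "\<forall>t. Suc t < 2*m-1 \<longrightarrow> b t < b (Suc t)"
      proof (intro allI impI)
        fix t assume t: "Suc t < 2*m-1"
        consider "Suc t < m" | "Suc t = m" | "t \<ge> m" by linarith
        then show "b t < b (Suc t)"
        proof cases
          case 1
          then show ?thesis using f(1)[of t "Suc t"] by (simp add: b_def)
        next
          case 2
          have "\<sigma> (a (m-1)) + (m-1-(m-2)) \<le> \<sigma> (a (m-2))" using f(2)[of "m-2" "m-1"] m by auto
          then show ?thesis using 2 t eqf by (auto simp: b_def)
        next
          case 3
          have "\<sigma> (a (2*m-2-t)) + ((2*m-2-t) - (2*m-2-Suc t)) \<le> \<sigma> (a (2*m-2-Suc t))"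
            using f(2)[of "2*m-2-Suc t" "2*m-2-t"] 3 t by auto
          then show ?thesis using 3 t by (auto simp: b_def)
        qed
      qed
      have brng: "\<forall>t<2*m-1. 1 \<le> b t \<and> b t \<le> Suc (2*m-1)"
      proof (intro allI impI)
        fix t assume t: "t < 2*m-1"
        show "1 \<le> b t \<and> b t \<le> Suc (2*m-1)"
          using f(3,4,6,7)[of t t] f(3,4,6,7)[of "2*m-2-t" "2*m-2-t"] t m by (auto simp: b_def)
      qed
      have "\<exists>x\<in>{1..Suc (2*m-1)}. \<forall>t<2*m-1. b t = cc x (Suc t)"
        by (rule incr_miss[OF binc brng]) (use m in linarith)
      then obtain x where x: "x \<in> {1..Suc (2*m-1)}" and hx: "\<forall>t<2*m-1. b t = cc x (Suc t)"
        by blast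
      have "\<forall>j\<in>{1..m}. \<sigma> (cc x j) = cc x (2*m-j)"
      proof
        fix j assume "j \<in> {1..m}"
        then obtain i where i: "j = Suc i" "i \<le> m-1" by (cases j) auto
        have ii: "i < 2*m-1" "i < m" using i m by auto
        have c1: "cc x j = a i" using hx[rule_format, OF ii(1)] ii(2) i by (simp add: b_def)
        have c2: "cc x (2*m-j) = b (2*m-1-j)" using hx[rule_format, of "2*m-1-j"] i m
          by (simp add: Suc_diff_Suc)
        show "\<sigma> (cc x j) = cc x (2*m-j)"
        proof (cases "j = m")
          case True
          then show ?thesis using c1 c2 eqf i by (simp add: b_def)
        next
          case False
          then have "2*m-2-(2*m-1-j) = i" "\<not> 2*m-1-j < m" using i by auto
          then show ?thesis using c1 c2 by (simp add: b_def)
        qed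
      qed
      moreover have "x \<in> {1..2*m}" using x m by auto
      ultimately show ?thesis by blast
    qed
  next
    assume l: "lower_nesting (2*m) \<sigma> m a"
    note f = lower_facts[OF l p]
    have key: "a j = 2*m-j \<and> \<sigma> (a j) = j+1" if "j \<le> m-1" for j
    proof -
      have "\<sigma> (a 0) + (j - 0) \<le> \<sigma> (a j)" "a j + (j-0) \<le> a 0" using f[of 0 j] that m by auto
      moreover have "\<sigma> (a j) + (m-1 - j) \<le> \<sigma> (a (m-1))" "a (m-1) + (m-1-j) \<le> a j" using f[of j "m-1"] that m by auto
      moreover have "\<sigma> (a 0) + (m-1 - 0) \<le> \<sigma> (a (m-1))" "a (m-1) + (m-1-0) \<le> a 0" "1 \<le> \<sigma> (a 0)" "a 0 \<le> 2*m"
        "\<sigma> (a (m-1)) < a (m-1)"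
        using f[of 0 "m-1"] m by auto
      ultimately show ?thesis using that m by (simp only: diff_zero) linarith
    qed
    have "\<forall>j\<in>{1..m}. \<sigma> (2*m+1-j) = j"
    proof
      fix j assume "j \<in> {1..m}"
      then obtain i where i: "j = Suc i" "i \<le> m-1" by (cases j) auto
      have k1: "a i = 2*m-i" "\<sigma> (a i) = Suc i" using key[of i] i by auto
      have "\<sigma> (2*m-i) = Suc i" using k1 by metis
      then show "\<sigma> (2*m+1-j) = j" using i by simp
    qed
    then show ?thesis by blast
  qed
qed

lemma cc_mono: "i < j \<Longrightarrow> cc x i < cc x j"
  by (auto simp: cc_def)

lemma cc_bounds: "j \<le> cc x j" "cc x j \<le> Suc j"
  by (auto simp: cc_def)

lemma even_char_dir2:
  assumes p: "\<sigma> permutes {1..2*m}" and m: "m \<ge> 1"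
    and h: "(\<forall>j\<in>{1..m}. \<sigma> j = 2*m+1-j) \<or> (\<forall>j\<in>{1..m}. \<sigma> (2*m+1-j) = j) \<or>
    (\<exists>x\<in>{1..2*m}. \<forall>j\<in>{1..m}. \<sigma> (cc x j) = cc x (2*m-j))"
  shows "has_nesting (2*m) \<sigma> m"
  using h
proof (elim disjE)
  assume h1: "\<forall>j\<in>{1..m}. \<sigma> j = 2*m+1-j"
  have "upper_nesting (2*m) \<sigma> m (\<lambda>j. j+1)"
    unfolding upper_nesting_def
  proof (intro conjI allI impI)
    fix i assume "Suc i < m"
    then show "i + 1 < Suc i + 1" "\<sigma> (Suc i + 1) < \<sigma> (i + 1)" using h1 by auto
  qed (use h1 m in auto)
  then show ?thesis unfolding has_nesting_def by blast
next
  assume h1: "\<forall>j\<in>{1..m}. \<sigma> (2*m+1-j) = j"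
  have h2: "\<sigma> (2*m-i) = Suc i" if "i < m" for i
    using h1[rule_format, of "Suc i"] that by auto
  have "lower_nesting (2*m) \<sigma> m (\<lambda>j. 2*m-j)"
    unfolding lower_nesting_def
  proof (intro conjI allI impI)
    fix i assume "Suc i < m"
    then show "2*m - Suc i < 2*m - i" "\<sigma> (2*m-i) < \<sigma> (2*m - Suc i)" using h2[of i] h2[of "Suc i"] by auto
  next
    show "\<sigma> (2 * m - (m - 1)) < 2 * m - (m - 1)" using h2[of "m-1"] m by auto
  qed (use m in auto)
  then show ?thesis unfolding has_nesting_def by blast
next
  assume "\<exists>x\<in>{1..2*m}. \<forall>j\<in>{1..m}. \<sigma> (cc x j) = cc x (2*m-j)"
  then obtain x where h1: "\<forall>j\<in>{1..m}. \<sigma> (cc x j) = cc x (2*m-j)" by blast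
  have h2: "\<sigma> (cc x (Suc i)) = cc x (2*m - Suc i)" if "i < m" for i
    using h1 that by auto
  have "upper_nesting (2*m) \<sigma> m (\<lambda>j. cc x (j+1))"
    unfolding upper_nesting_def
  proof (intro conjI allI impI)
    fix i assume i: "Suc i < m"
    show "cc x (i + 1) < cc x (Suc i + 1)" by (rule cc_mono) simp
    have "cc x (2*m - Suc (Suc i)) < cc x (2*m - Suc i)" by (rule cc_mono) (use i in auto)
    then show "\<sigma> (cc x (Suc i + 1)) < \<sigma> (cc x (i + 1))" using h2[of i] h2[of "Suc i"] i by simp
  next
    fix i assume i: "i < m"
    show "cc x (i+1) \<in> {1..2*m}" using cc_bounds[where j="i+1" and x=x] i by auto
  next
    have "\<sigma> (cc x (m - 1 + 1)) = cc x (m - 1 + 1)" using h2[of "m-1"] m by (simp add: mult_2)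
    then show "cc x (m - 1 + 1) \<le> \<sigma> (cc x (m - 1 + 1))" by simp
  qed (use m in auto)
  then show ?thesis unfolding has_nesting_def by blast
qed



lemma cc_inj: "cc x i = cc x j \<Longrightarrow> i = j"
  by (auto simp: cc_def split: if_splits)

lemma Fapp: "\<forall>j\<in>{1..m}. \<sigma> (cc x j) = cc x (2*m-j) \<Longrightarrow> j \<in> {1..m} \<Longrightarrow> cc x j = u \<Longrightarrow> cc x (2*m-j) = v \<Longrightarrow> \<sigma> u = v"
  by auto

lemma disj_UP_F:
  assumes p: "\<sigma> permutes {1..2*m}" and m: "m \<ge> 1"
    and u: "\<forall>j\<in>{1..m}. \<sigma> j = 2*m+1-j" and f: "\<forall>j\<in>{1..m}. \<sigma> (cc x j) = cc x (2*m-j)"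
  shows False
proof -
  have inj: "inj \<sigma>" using permutes_inj[OF p] .
  have fm: "\<sigma> (cc x m) = cc x m" using f[rule_format, of m] m by (simp add: mult_2)
  have um: "\<sigma> m = Suc m" using u[rule_format, of m] m by simp
  show False
  proof (cases "x \<le> m")
    case True
    then have "\<sigma> (Suc m) = Suc m" using fm by (simp add: cc_def)
    then show False using um injD[OF inj, of m "Suc m"] by simp
  next
    case False
    then have "\<sigma> m = m" using fm by (simp add: cc_def)
    then show False using um by simp
  qed
qed

lemma disj_LO_F:
  assumes p: "\<sigma> permutes {1..2*m}" and m: "m \<ge> 1"
    and u: "\<forall>j\<in>{1..m}. \<sigma> (2*m+1-j) = j" and f: "\<forall>j\<in>{1..m}. \<sigma> (cc x j) = cc x (2*m-j)"
  shows False
proof -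
  have inj: "inj \<sigma>" using permutes_inj[OF p] .
  have fm: "\<sigma> (cc x m) = cc x m" using f[rule_format, of m] m by (simp add: mult_2)
  have um: "\<sigma> (Suc m) = m" using u[rule_format, of m] m by (simp add: mult_2)
  show False
  proof (cases "x \<le> m")
    case True
    then have "\<sigma> (Suc m) = Suc m" using fm by (simp add: cc_def)
    then show False using um by simp
  next
    case False
    then have "\<sigma> m = m" using fm by (simp add: cc_def)
    then show False using um injD[OF inj, of m "Suc m"] by simp
  qed
qed

lemma disj_FF:
  assumes p: "\<sigma> permutes {1..2*m}" and m: "m \<ge> 1" and xy: "x < y" "1 \<le> x" "y \<le> 2*m"
    and nxy: "\<not> (x = m \<and> y = Suc m)"
    and fx: "\<forall>j\<in>{1..m}. \<sigma> (cc x j) = cc x (2*m-j)"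
    and fy: "\<forall>j\<in>{1..m}. \<sigma> (cc y j) = cc y (2*m-j)"
  shows False
proof -
  have inj: "inj \<sigma>" using permutes_inj[OF p] .
  consider "y \<le> m" | "x \<ge> Suc m" | "x < m" "y \<ge> Suc m" | "x = m" "y \<ge> Suc (Suc m)" using nxy xy by linarith
  then show False
  proof cases
    case 1
    have c1: "cc x (y-1) = y" "cc x (2*m-(y-1)) = 2*m+2-y" using 1 xy by (auto simp: cc_def)
    have "y - 1 \<in> {1..m}" using 1 xy by auto
    then have a: "\<sigma> y = 2*m+2-y"
      using fx c1 by metis
    have b: "\<sigma> (y-1) = 2*m+2-y"
      by (rule Fapp[OF fy, of "y-1"]) (use 1 xy in \<open>auto simp: cc_def\<close>)
    show False using a b injD[OF inj, of y "y-1"] xy by simp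
  next
    case 2
    have a: "\<sigma> (2*m-x) = Suc x"
      by (rule Fapp[OF fx, of "2*m-x"]) (use 2 xy in \<open>auto simp: cc_def\<close>)
    have b: "\<sigma> (2*m-x) = x"
      by (rule Fapp[OF fy, of "2*m-x"]) (use 2 xy in \<open>auto simp: cc_def\<close>)
    show False using a b by simp
  next
    case 3
    have a: "\<sigma> m = m+2"
      by (rule Fapp[OF fx, of "m-1"]) (use 3 xy in \<open>auto simp: cc_def\<close>)
    have b: "\<sigma> m = m"
      by (rule Fapp[OF fy, of m]) (use 3 xy m in \<open>auto simp: cc_def\<close>)
    show False using a b by simp
  next
    case 4
    have a: "\<sigma> (Suc m) = Suc m"
      by (rule Fapp[OF fx, of m]) (use 4 xy m in \<open>auto simp: cc_def\<close>)
    have b: "\<sigma> (m-1) = Suc m"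
      by (rule Fapp[OF fy, of "m-1"]) (use 4 xy in \<open>auto simp: cc_def\<close>)
    show False using a b injD[OF inj, of "Suc m" "m-1"] by simp
  qed
qed

lemma disj_FF':
  assumes p: "\<sigma> permutes {1..2*m}" and m: "m \<ge> 1" and xy: "x \<noteq> y" "x \<in> {1..2*m}" "y \<in> {1..2*m}"
    and nxy: "{x, y} \<noteq> {m, Suc m}"
    and fx: "\<forall>j\<in>{1..m}. \<sigma> (cc x j) = cc x (2*m-j)"
    and fy: "\<forall>j\<in>{1..m}. \<sigma> (cc y j) = cc y (2*m-j)"
  shows False
proof (cases "x < y")
  case True
  show False by (rule disj_FF[OF p m True _ _ _ fx fy]) (use xy nxy in auto)
next
  case False
  then have "y < x" using xy by simp
  show False by (rule disj_FF[OF p m \<open>y < x\<close> _ _ _ fy fx]) (use xy nxy in auto)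
qed



lemma even_count:
  assumes m: "m \<ge> 1"
  shows "card {\<sigma>. \<sigma> permutes {1..2*m} \<and> has_nesting (2*m) \<sigma> m} = 2 * fact (m+1) - fact (m-1) - 1"
proof -
  define S0 where "S0 = {1..2*m}"
  define P0 where "P0 = {\<sigma>. \<sigma> permutes S0}"
  have finP: "finite P0" unfolding P0_def S0_def by (rule finite_permutations) simp
  have cS0: "card S0 = 2*m" unfolding S0_def by simp
  define UP where "UP = {\<sigma>. \<sigma> permutes S0 \<and> (\<forall>j\<in>{1..m}. \<sigma> j = 2*m+1-j)}"
  define LO where "LO = {\<sigma>. \<sigma> permutes S0 \<and> (\<forall>j\<in>{1..m}. \<sigma> (2*m+1-j) = j)}"
  define F where "F x = {\<sigma>. \<sigma> permutes S0 \<and> (\<forall>j\<in>{1..m}. \<sigma> (cc x j) = cc x (2*m-j))}" for x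
  define X' where "X' = {1..2*m} - {m, Suc m}"
  define V where "V = F m \<union> F (Suc m)"
  define W where "W = (\<Union>x\<in>X'. F x)"
  have fin: "finite A" if "A \<subseteq> P0" for A using finite_subset[OF that finP] .
  have subs: "UP \<subseteq> P0" "LO \<subseteq> P0" "F x \<subseteq> P0" for x unfolding UP_def LO_def F_def P0_def by auto
  have finF: "finite (F x)" for x using fin[OF subs(3)] .
  have finW: "finite W" unfolding W_def X'_def using finF by auto
  have finV: "finite V" unfolding V_def using finF by auto
  have finUL: "finite (UP \<union> LO)" using fin subs by blast
  have Seq: "{\<sigma>. \<sigma> permutes {1..2*m} \<and> has_nesting (2*m) \<sigma> m} = (UP \<union> LO) \<union> (V \<union> W)"
  proof -
    have "{1..2*m} = {m, Suc m} \<union> X'" unfolding X'_def using m by auto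
    then have U: "(\<Union>x\<in>{1..2*m}. F x) = V \<union> W" unfolding V_def W_def by auto
    have "{\<sigma>. \<sigma> permutes {1..2*m} \<and> has_nesting (2*m) \<sigma> m} = UP \<union> LO \<union> (\<Union>x\<in>{1..2*m}. F x)"
      unfolding UP_def LO_def F_def S0_def
      using even_char_dir1[OF _ m] even_char_dir2[OF _ m] by blast
    then show ?thesis using U by simp
  qed
  have cUP: "card UP = fact m"
  proof -
    have "card UP = fact (card S0 - card {1..m})" unfolding UP_def
      by (rule card_ext2[where g="\<lambda>j. j" and h="\<lambda>j. 2*m+1-j"]) (auto simp: S0_def inj_on_def)
    then show ?thesis using cS0 by simp
  qed
  have cLO: "card LO = fact m"
  proof -
    have "card LO = fact (card S0 - card {1..m})" unfolding LO_def
      by (rule card_ext2[where h="\<lambda>j. j" and g="\<lambda>j. 2*m+1-j"]) (auto simp: S0_def inj_on_def)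
    then show ?thesis using cS0 by simp
  qed
  have cF: "card (F x) = fact m" for x
  proof -
    have "card (F x) = fact (card S0 - card {1..m})" unfolding F_def
    proof (rule card_ext2)
      show "cc x ` {1..m} \<subseteq> S0" unfolding S0_def
      proof
        fix y assume "y \<in> cc x ` {1..m}"
        then obtain j where j: "j \<in> {1..m}" "y = cc x j" by auto
        then show "y \<in> {1..2*m}" using cc_bounds[where x=x and j=j] by auto
      qed
      show "(\<lambda>j. cc x (2*m-j)) ` {1..m} \<subseteq> S0" unfolding S0_def
      proof
        fix y assume "y \<in> (\<lambda>j. cc x (2*m-j)) ` {1..m}"
        then obtain j where j: "j \<in> {1..m}" "y = cc x (2*m-j)" by auto
        then show "y \<in> {1..2*m}" using cc_bounds[where x=x and j="2*m-j"] by auto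
      qed
      show "inj_on (cc x) {1..m}" by (auto simp: inj_on_def dest: cc_inj)
      show "inj_on (\<lambda>j. cc x (2*m-j)) {1..m}"
      proof (rule inj_onI)
        fix i j assume "i \<in> {1..m}" "j \<in> {1..m}" "cc x (2*m-i) = cc x (2*m-j)"
        then show "i = j" using cc_inj[of x "2*m-i" "2*m-j"] by auto
      qed
    qed (simp add: S0_def)
    then show ?thesis using cS0 by simp
  qed
  have cULi: "card (UP \<inter> LO) = 1"
  proof -
    have "UP \<inter> LO = {\<sigma>. \<sigma> permutes S0 \<and> (\<forall>j\<in>S0. \<sigma> j = 2*m+1-j)}"
    proof (intro set_eqI iffI)
      fix \<sigma> assume "\<sigma> \<in> UP \<inter> LO"
      then have p: "\<sigma> permutes S0" and u: "\<forall>j\<in>{1..m}. \<sigma> j = 2*m+1-j" and l: "\<forall>j\<in>{1..m}. \<sigma> (2*m+1-j) = j"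
        unfolding UP_def LO_def by auto
      have "\<sigma> j = 2*m+1-j" if "j \<in> S0" for j
      proof (cases "j \<le> m")
        case True then show ?thesis using u that unfolding S0_def by auto
      next
        case False
        then have "2*m+1-j \<in> {1..m}" "2*m+1-(2*m+1-j) = j" using that unfolding S0_def by auto
        then show ?thesis using l by metis
      qed
      then show "\<sigma> \<in> {\<sigma>. \<sigma> permutes S0 \<and> (\<forall>j\<in>S0. \<sigma> j = 2*m+1-j)}" using p by auto
    next
      fix \<sigma> assume "\<sigma> \<in> {\<sigma>. \<sigma> permutes S0 \<and> (\<forall>j\<in>S0. \<sigma> j = 2*m+1-j)}"
      then have p: "\<sigma> permutes S0" and r: "\<forall>j\<in>S0. \<sigma> j = 2*m+1-j" by auto
      have "\<forall>j\<in>{1..m}. \<sigma> j = 2*m+1-j" using r unfolding S0_def by auto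
      moreover have "\<forall>j\<in>{1..m}. \<sigma> (2*m+1-j) = j"
      proof
        fix j assume j: "j \<in> {1..m}"
        then have "2*m+1-j \<in> S0" "2*m+1-(2*m+1-j) = j" unfolding S0_def by auto
        then show "\<sigma> (2*m+1-j) = j" using r by metis
      qed
      ultimately show "\<sigma> \<in> UP \<inter> LO" using p unfolding UP_def LO_def by auto
    qed
    also have "card \<dots> = fact (card S0 - card S0)"
      by (rule card_ext2[where g="\<lambda>j. j" and h="\<lambda>j. 2*m+1-j"]) (auto simp: S0_def inj_on_def)
    finally show ?thesis by simp
  qed
  have cVi: "card (F m \<inter> F (Suc m)) = fact (m - 1)"
  proof -
    define G where "G j = (if j \<ge> m then j else 2*m+1-j)" for j
    have "F m \<inter> F (Suc m) = {\<sigma>. \<sigma> permutes S0 \<and> (\<forall>j\<in>{1..Suc m}. \<sigma> j = G j)}"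
    proof (intro set_eqI iffI)
      fix \<sigma> assume "\<sigma> \<in> F m \<inter> F (Suc m)"
      then have p: "\<sigma> permutes S0" and f1: "\<forall>j\<in>{1..m}. \<sigma> (cc m j) = cc m (2*m-j)"
        and f2: "\<forall>j\<in>{1..m}. \<sigma> (cc (Suc m) j) = cc (Suc m) (2*m-j)" unfolding F_def by auto
      have "\<sigma> j = G j" if j: "j \<in> {1..Suc m}" for j
      proof -
        consider "j < m" | "j = m" | "j = Suc m" using j by fastforce
        then show ?thesis
        proof cases
          case 1 then show ?thesis
            by (intro Fapp[OF f1, of j]) (use 1 j in \<open>auto simp: cc_def G_def\<close>)
        next
          case 2 then show ?thesis
            by (intro Fapp[OF f2, of j]) (use 2 j m in \<open>auto simp: cc_def G_def\<close>)
        next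
          case 3 then show ?thesis
            by (intro Fapp[OF f1, of m]) (use 3 j m in \<open>auto simp: cc_def G_def\<close>)
        qed
      qed
      then show "\<sigma> \<in> {\<sigma>. \<sigma> permutes S0 \<and> (\<forall>j\<in>{1..Suc m}. \<sigma> j = G j)}" using p by auto
    next
      fix \<sigma> assume "\<sigma> \<in> {\<sigma>. \<sigma> permutes S0 \<and> (\<forall>j\<in>{1..Suc m}. \<sigma> j = G j)}"
      then have p: "\<sigma> permutes S0" and g: "\<forall>j\<in>{1..Suc m}. \<sigma> j = G j" by auto
      have "\<forall>j\<in>{1..m}. \<sigma> (cc m j) = cc m (2*m-j)"
      proof
        fix j assume j: "j \<in> {1..m}"
        show "\<sigma> (cc m j) = cc m (2*m-j)"
        proof (cases "j < m")
          case True
          then show ?thesis using g[rule_format, of j] j by (auto simp: cc_def G_def)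
        next
          case False
          then have "j = m" using j by auto
          then show ?thesis using g[rule_format, of "Suc m"] by (auto simp: cc_def G_def mult_2)
        qed
      qed
      moreover have "\<forall>j\<in>{1..m}. \<sigma> (cc (Suc m) j) = cc (Suc m) (2*m-j)"
      proof
        fix j assume j: "j \<in> {1..m}"
        show "\<sigma> (cc (Suc m) j) = cc (Suc m) (2*m-j)"
        proof (cases "j < m")
          case True
          then show ?thesis using g[rule_format, of j] j by (auto simp: cc_def G_def)
        next
          case False
          then have "j = m" using j by auto
          then show ?thesis using g[rule_format, of m] m by (auto simp: cc_def G_def mult_2)
        qed
      qed
      ultimately show "\<sigma> \<in> F m \<inter> F (Suc m)" using p unfolding F_def by auto
    qed
    also have "card \<dots> = fact (card S0 - card {1..Suc m})"
    proof (rule card_ext2[where g="\<lambda>j. j"])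
      show "G ` {1..Suc m} \<subseteq> S0" using m by (auto simp: G_def S0_def)
      show "inj_on G {1..Suc m}" by (auto simp: inj_on_def G_def split: if_splits)
    qed (use m in \<open>auto simp: S0_def\<close>)
    finally show ?thesis using cS0 by simp
  qed
  have cV: "card V + fact (m-1) = 2 * fact m"
    using card_Un_Int[OF finF finF, of m "Suc m"] cF cVi unfolding V_def by simp
  have cUL: "card (UP \<union> LO) + 1 = 2 * fact m"
    using card_Un_Int[of UP LO] fin subs cUP cLO cULi by simp
  have cX': "card X' = 2*m - 2"
  proof -
    have "{m, Suc m} \<subseteq> {1..2*m}" using m by auto
    then show ?thesis unfolding X'_def by (simp add: card_Diff_subset)
  qed
  have cW: "card W = (2*m-2) * fact m"
  proof -
    have "card W = (\<Sum>x\<in>X'. card (F x))" unfolding W_def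
    proof (rule card_UN_disjoint)
      show "finite X'" unfolding X'_def by simp
      show "\<forall>i\<in>X'. finite (F i)" using finF by simp
      show "\<forall>i\<in>X'. \<forall>j\<in>X'. i \<noteq> j \<longrightarrow> F i \<inter> F j = {}"
      proof (intro ballI impI)
        fix i j assume ij: "i \<in> X'" "j \<in> X'" "i \<noteq> j"
        show "F i \<inter> F j = {}"
        proof (rule ccontr)
          assume "F i \<inter> F j \<noteq> {}"
          then obtain \<sigma> where "\<sigma> \<in> F i" "\<sigma> \<in> F j" by blast
          then show False using disj_FF'[OF _ m ij(3), of \<sigma>] ij unfolding F_def X'_def S0_def by auto
        qed
      qed
    qed
    then show ?thesis using cF cX' by simp
  qed
  have dVW: "V \<inter> W = {}"
  proof (rule ccontr)
    assume "V \<inter> W \<noteq> {}"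
    then obtain \<sigma> x y where h: "\<sigma> \<in> F x" "x \<in> {m, Suc m}" "\<sigma> \<in> F y" "y \<in> X'" unfolding V_def W_def by blast
    then have "{x, y} \<noteq> {m, Suc m}" "x \<noteq> y" unfolding X'_def by auto
    then show False using disj_FF'[OF _ m, of \<sigma> x y] m h unfolding F_def X'_def S0_def by auto
  qed
  have dUL: "(UP \<union> LO) \<inter> (V \<union> W) = {}"
  proof (rule ccontr)
    assume "(UP \<union> LO) \<inter> (V \<union> W) \<noteq> {}"
    then obtain \<sigma> x where s: "\<sigma> \<in> UP \<union> LO" "\<sigma> \<in> F x" unfolding V_def W_def by blast
    then show False using disj_UP_F[OF _ m, of \<sigma> x] disj_LO_F[OF _ m, of \<sigma> x]
      unfolding UP_def LO_def F_def S0_def by auto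
  qed
  have "card {\<sigma>. \<sigma> permutes {1..2*m} \<and> has_nesting (2*m) \<sigma> m} = card (UP \<union> LO) + (card V + card W)"
    unfolding Seq using card_Un_disjoint[OF finUL _ dUL] card_Un_disjoint[OF finV finW dVW] finV finW by simp
  moreover have "(2*m-2) * fact m + 4 * fact m = 2 * ((m+1) * fact m)"
    using m by (cases m) (simp_all add: algebra_simps)
  moreover have "fact (m+1) = (m+1) * fact m" by simp
  ultimately show ?thesis using cV cUL cW by linarith
qed



theorem theorem2:
  fixes n :: nat
  assumes "n \<ge> 1"
  shows "NE n ((n + 1) div 2) =
    (if odd n then fact ((n - 1) div 2)
     else 2 * fact (n div 2 + 1) - fact (n div 2 - 1) - 1)"
proof -
  have NEeq: "NE n ((n + 1) div 2) = card {\<sigma>. \<sigma> permutes {1..n} \<and> has_nesting n \<sigma> ((n + 1) div 2)}"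
    unfolding NE_def using nesting_number_eq[OF _ assms] by (metis (lifting))
  show ?thesis
  proof (cases "odd n")
    case True
    then obtain m where n: "n = 2*m+1" using oddE by blast
    have K: "(n + 1) div 2 = m + 1" "(n - 1) div 2 = m" using n by auto
    have "{\<sigma>. \<sigma> permutes {1..n} \<and> has_nesting n \<sigma> ((n + 1) div 2)} =
        {\<sigma>. \<sigma> permutes {1..2*m+1} \<and> (\<forall>j\<in>{1..m+1}. \<sigma> j = 2*m+2-j)}"
      unfolding K(1) unfolding n using odd_char by blast
    also have "card \<dots> = fact (card {1..2*m+1} - card {1..m+1})"
      by (rule card_ext) (auto simp: inj_on_def)
    finally show ?thesis using NEeq True K by simp
  next
    case False
    then obtain m where n: "n = 2*m" using evenE by blast
    then have m: "m \<ge> 1" using assms by simp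
    have K: "(n + 1) div 2 = m" "n div 2 = m" using n by auto
    show ?thesis using NEeq False even_count[OF m] unfolding K by (simp add: n)
  qed
qed


end
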